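(* Let $\mathbb{R}^n_s$ be $\mathbb{R}^n$ with a non-degenerate symmetric bilinear form $\langle\cdot,\cdot\rangle$ of signature $(n-s,s)$, let $G\subset\mathrm{Iso}(\mathbb{R}^n_s)$ be a real Zariski-closed subgroup whose centralizer in $\mathrm{Iso}(\mathbb{R}^n_s)$ acts transitively on $\mathbb{R}^n$, and let $\mathfrak{g}$ be its Lie algebra with the symmetric bilinear form $(\cdot,\cdot)$ induced by the orbit metric. If $X,Y\in\mathfrak{g}$ and $Z=[X,Y]$, then $Z$ is orthogonal with respect to $(\cdot,\cdot)$ to $\mathrm{span}\{X,Y,Z\}$.
   Context: Elements of $\mathfrak{g}$ are written $(A,v)$ (matrices $\begin{pmatrix}A&v\\0&0\end{pmatrix}$). For fixed $p\in\mathbb{R}^n$, the orbit metric form on $\mathfrak{g}$ is $(X,Y)=\langle A_Xp+v_X,\,A_Yp+v_Y\rangle$, i.e. the pullback of $\langle\cdot,\cdot\rangle$ on the orbit $G.p$ via the orbit map; it satisfies $([X,Y],Z)=-(Y,[X,Z])$, and $\mathfrak{g}$ is 2-step nilpotent. *)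

theory Defs
  imports "HOL-Analysis.Analysis"
begin

text \<open>An affine map x |-> M x + b of R^n is represented by the pair (M, b).
  Elements of the Lie algebra of the affine group are pairs (A, v), standing for
  the block matrix [[A, v], [0, 0]].\<close>

type_synonym 'n aff = "(real^'n^'n) \<times> (real^'n)"

definition aff_apply :: "'n::finite aff \<Rightarrow> real^'n \<Rightarrow> real^'n" where
  "aff_apply g x = fst g *v x + snd g"

definition aff_comp :: "'n::finite aff \<Rightarrow> 'n aff \<Rightarrow> 'n aff" where
  "aff_comp g h = (fst g ** fst h, fst g *v snd h + snd g)"

definition aff_id :: "'n::finite aff" where
  "aff_id = (mat 1, 0)"

text \<open>The bilinear form given by a matrix S: <u,w> = u . (S w).\<close>
definition bform :: "real^'n^'n \<Rightarrow> real^'n \<Rightarrow> real^'n \<Rightarrow> real" where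
  "bform S u w = u \<bullet> (S *v w)"

definition nondeg_sym_form :: "real^'n^'n \<Rightarrow> bool" where
  "nondeg_sym_form S \<longleftrightarrow> transpose S = S \<and> invertible S"

text \<open>Iso(R^n_s): affine maps whose linear part preserves the form.\<close>
definition Iso :: "real^'n^'n \<Rightarrow> 'n::finite aff set" where
  "Iso S = {g. transpose (fst g) ** S ** fst g = S}"

definition is_subgroup :: "'n::finite aff set \<Rightarrow> bool" where
  "is_subgroup G \<longleftrightarrow> aff_id \<in> G \<and> (\<forall>g\<in>G. \<forall>h\<in>G. aff_comp g h \<in> G)
     \<and> (\<forall>g\<in>G. \<exists>h\<in>G. aff_comp g h = aff_id \<and> aff_comp h g = aff_id)"

text \<open>Real polynomial functions in the coordinates (matrix entries and translation
  entries) of an affine map.\<close>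
inductive_set poly_fun :: "('n::finite aff \<Rightarrow> real) set" where
  const: "(\<lambda>_. c) \<in> poly_fun"
| coord_mat: "(\<lambda>g. fst g $ i $ j) \<in> poly_fun"
| coord_vec: "(\<lambda>g. snd g $ i) \<in> poly_fun"
| add: "p \<in> poly_fun \<Longrightarrow> q \<in> poly_fun \<Longrightarrow> (\<lambda>g. p g + q g) \<in> poly_fun"
| mult: "p \<in> poly_fun \<Longrightarrow> q \<in> poly_fun \<Longrightarrow> (\<lambda>g. p g * q g) \<in> poly_fun"

definition zariski_closed :: "'n::finite aff set \<Rightarrow> bool" where
  "zariski_closed G \<longleftrightarrow> (\<exists>P \<subseteq> poly_fun. G = {g. \<forall>p\<in>P. p g = 0})"

definition centralizer :: "real^'n^'n \<Rightarrow> 'n::finite aff set \<Rightarrow> 'n aff set" where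
  "centralizer S G = {h \<in> Iso S. \<forall>g\<in>G. aff_comp h g = aff_comp g h}"

definition acts_transitively :: "'n::finite aff set \<Rightarrow> bool" where
  "acts_transitively H \<longleftrightarrow> (\<forall>x y. \<exists>h\<in>H. aff_apply h x = y)"

definition matpow :: "real^'n^'n \<Rightarrow> nat \<Rightarrow> real^'n^'n" where
  "matpow A k = ((\<lambda>M. A ** M) ^^ k) (mat 1)"

definition mexp :: "real^'n^'n \<Rightarrow> real^'n^'n" where
  "mexp A = (\<Sum>k. (1 / fact k :: real) *\<^sub>R matpow A k)"

text \<open>Exponential of the block matrix [[A, v], [0, 0]], which is
  [[exp A, (sum_k A^k/(k+1)!) v], [0, 1]].\<close>
definition aff_exp :: "'n::finite aff \<Rightarrow> 'n aff" where
  "aff_exp X = (mexp (fst X), (\<Sum>k. (1 / fact (Suc k) :: real) *\<^sub>R (matpow (fst X) k *v snd X)))"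

definition lie_algebra :: "'n::finite aff set \<Rightarrow> 'n aff set" where
  "lie_algebra G = {X. \<forall>t::real. aff_exp (t *\<^sub>R X) \<in> G}"

text \<open>Commutator of [[A, v], [0, 0]] and [[B, w], [0, 0]].\<close>
definition lie_bracket :: "'n::finite aff \<Rightarrow> 'n aff \<Rightarrow> 'n aff" where
  "lie_bracket X Y = (fst X ** fst Y - fst Y ** fst X, fst X *v snd Y - fst Y *v snd X)"

text \<open>Orbit metric form at p: (X,Y) = <A_X p + v_X, A_Y p + v_Y>.\<close>
definition orbit_form :: "real^'n^'n \<Rightarrow> real^'n \<Rightarrow> 'n::finite aff \<Rightarrow> 'n aff \<Rightarrow> real" where
  "orbit_form S p X Y = bform S (fst X *v p + snd X) (fst Y *v p + snd Y)"

end

theory Submission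
  imports Defs
begin



lemma matpow_0[simp]: "matpow A 0 = mat 1" by (simp add: matpow_def)
lemma matpow_Suc[simp]: "matpow A (Suc k) = A ** matpow A k" by (simp add: matpow_def)

lemma sc1: "((t::real) *\<^sub>R A) ** B = t *\<^sub>R ((A::real^'n::finite^'m::finite) ** (B::real^'k::finite^'n))"
  by (simp add: matrix_matrix_mult_def vec_eq_iff sum_distrib_left mult.assoc)
lemma sc2: "A ** ((t::real) *\<^sub>R B) = t *\<^sub>R ((A::real^'n::finite^'m::finite) ** (B::real^'k::finite^'n))"
  by (simp add: matrix_matrix_mult_def vec_eq_iff sum_distrib_left mult.left_commute)

lemma matpow_scale: "matpow (t *\<^sub>R A) k = (t^k) *\<^sub>R matpow A k"
proof (induction k)
  case 0 then show ?case by simp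
next
  case (Suc k)
  have "matpow (t *\<^sub>R A) (Suc k) = (t *\<^sub>R A) ** ((t^k) *\<^sub>R matpow A k)"
    using Suc by simp
  also have "\<dots> = (t * t^k) *\<^sub>R (A ** matpow A k)"
    by (simp only: sc1 sc2 scaleR_scaleR mult.commute)
  also have "\<dots> = (t ^ Suc k) *\<^sub>R (A ** matpow A k)" by (simp only: power_Suc)
  finally show ?case by (simp only: matpow_Suc)
qed

lemma dot_mv: "((M::real^'n::finite^'m::finite) *v u) \<bullet> y = u \<bullet> (transpose M *v y)"
proof -
  have "u \<bullet> (transpose M *v y) = (y v* M) \<bullet> u"
    by (simp only: transpose_matrix_vector inner_commute[of u])
  also have "\<dots> = y \<bullet> (M *v u)" by (rule dot_lmul_matrix)
  also have "\<dots> = (M *v u) \<bullet> y" by (rule inner_commute)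
  finally show ?thesis by (rule sym)
qed

lemma bl_mv: "bounded_linear ((*v) (M::real^'n::finite^'m::finite))"
  by (rule matrix_vector_mul_bounded_linear)

lemma mv_bound: "norm ((M::real^'n::finite^'m::finite) *v x) \<le> onorm ((*v) M) * norm x"
  using onorm[OF bl_mv] .

lemma matpow_vec_bound:
  "norm (matpow (A::real^'n::finite^'n) k *v x) \<le> onorm ((*v) A) ^ k * norm x"
proof (induction k arbitrary: x)
  case 0 then show ?case by simp
next
  case (Suc k)
  have "norm (matpow A (Suc k) *v x) = norm (A *v (matpow A k *v x))"
    by (simp add: matrix_vector_mul_assoc)
  also have "\<dots> \<le> onorm ((*v) A) * norm (matpow A k *v x)" by (rule mv_bound)
  also have "\<dots> \<le> onorm ((*v) A) * (onorm ((*v) A) ^ k * norm x)"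
    by (rule mult_left_mono[OF Suc.IH onorm_pos_le[OF bl_mv]])
  finally show ?case by (simp only: power_Suc mult.assoc)
qed

lemma mat_norm_bound:
  "norm (M::real^'n::finite^'n) \<le> real CARD('n) * real CARD('n) * onorm ((*v) M)"
proof -
  have row: "norm (M $ i) \<le> real CARD('n) * onorm ((*v) M)" for i
  proof -
    have "norm (M $ i) \<le> (\<Sum>j\<in>UNIV. \<bar>M $ i $ j\<bar>)" by (rule norm_le_l1_cart)
    also have "\<dots> \<le> (\<Sum>j\<in>(UNIV::'n set). onorm ((*v) M))"
    proof (rule sum_mono)
      fix j
      have "\<bar>M $ i $ j\<bar> = \<bar>column j M $ i\<bar>" by (simp add: column_def)
      also have "\<dots> \<le> norm (column j M)" by (rule component_le_norm_cart)
      also have "\<dots> \<le> onorm ((*v) M)" by (rule norm_column_le_onorm)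
      finally show "\<bar>M $ i $ j\<bar> \<le> onorm ((*v) M)" .
    qed
    finally show ?thesis by simp
  qed
  have "norm M \<le> (\<Sum>i\<in>UNIV. norm (M $ i))"
    unfolding norm_vec_def by (rule L2_set_le_sum) simp
  also have "\<dots> \<le> (\<Sum>i\<in>(UNIV::'n set). real CARD('n) * onorm ((*v) M))"
    by (rule sum_mono[OF row])
  finally show ?thesis by (simp add: mult.assoc)
qed

lemma matpow_norm_bound:
  "norm (matpow (A::real^'n::finite^'n) k) \<le> real CARD('n) * real CARD('n) * onorm ((*v) A) ^ k"
proof -
  have "onorm ((*v) (matpow A k)) \<le> onorm ((*v) A) ^ k"
    by (rule onorm_le) (rule matpow_vec_bound)
  then have "real CARD('n) * real CARD('n) * onorm ((*v) (matpow A k)) \<le> real CARD('n) * real CARD('n) * onorm ((*v) A) ^ k"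
    by (intro mult_left_mono) auto
  then show ?thesis using mat_norm_bound[of "matpow A k"] by linarith
qed




lemma exp_series_real: "(\<lambda>n. (x::real) ^ n / fact n) sums exp x"
proof -
  have "(\<lambda>n. x ^ n /\<^sub>R fact n) sums exp x" by (rule exp_converges)
  then show ?thesis by (simp add: divide_inverse_commute mult.commute)
qed

lemma series_bound:
  fixes u :: "nat \<Rightarrow> 'a::banach"
  assumes ub: "\<And>k. norm (u k) \<le> C * b^k" and b: "b \<ge> 0"
  shows "summable (\<lambda>k. (t^k / fact k) *\<^sub>R u k)"
    and "norm ((\<Sum>k. (t^k / fact k) *\<^sub>R u k) - u 0 - t *\<^sub>R u 1) \<le> t^2 * (C * b^2 * exp (\<bar>t\<bar>*b))"
proof -
  define f where "f = (\<lambda>k. (t^k / fact k) *\<^sub>R u k)"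
  have C: "C \<ge> 0" using ub[of 0] by (metis norm_ge_zero order_trans power_0 mult_1_right)
  have tb: "\<bar>t\<bar> * b \<ge> 0" using b by simp
  have es: "(\<lambda>n. (\<bar>t\<bar>*b) ^ n / fact n) sums exp (\<bar>t\<bar>*b)" by (rule exp_series_real)
  have nf: "norm (f k) \<le> C * ((\<bar>t\<bar>*b) ^ k / fact k)" for k
  proof -
    have "norm (f k) = (\<bar>t\<bar>^k / fact k) * norm (u k)"
      by (simp add: f_def power_abs)
    also have "\<dots> \<le> (\<bar>t\<bar>^k / fact k) * (C * b^k)"
      by (rule mult_left_mono[OF ub]) simp
    also have "\<dots> = C * ((\<bar>t\<bar>*b) ^ k / fact k)"
      by (simp add: power_mult_distrib)
    finally show ?thesis .
  qed
  have sg: "summable (\<lambda>k. C * ((\<bar>t\<bar>*b) ^ k / fact k))"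
    using es by (intro summable_mult) (simp add: sums_summable)
  show sf: "summable (\<lambda>k. (t^k / fact k) *\<^sub>R u k)"
    unfolding f_def[symmetric] by (rule summable_comparison_test'[OF sg nf])
  have split: "suminf f = (\<Sum>n. f (n + 2)) + sum f {..<2}"
    by (rule suminf_split_initial_segment) (simp add: f_def sf)
  have s2: "sum f {..<2} = u 0 + t *\<^sub>R u 1"
    by (simp add: f_def numeral_2_eq_2)
  have bnd: "norm (f (n + 2)) \<le> t^2 * (C * b^2) * ((\<bar>t\<bar>*b) ^ n / fact n)" for n
  proof -
    have "norm (f (n+2)) \<le> C * ((\<bar>t\<bar>*b) ^ (n+2) / fact (n+2))" by (rule nf)
    also have "\<dots> \<le> C * ((\<bar>t\<bar>*b) ^ (n+2) / fact n)"
      by (intro mult_left_mono divide_left_mono fact_mono) (simp_all add: C tb)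
    also have "\<dots> = t^2 * (C * b^2) * ((\<bar>t\<bar>*b) ^ n / fact n)"
      by (simp add: power_add power_mult_distrib power2_eq_square)
    finally show ?thesis .
  qed
  have "norm (\<Sum>n. f (n + 2)) \<le> (\<Sum>n. t^2 * (C * b^2) * ((\<bar>t\<bar>*b) ^ n / fact n))"
    by (rule norm_suminf_le[OF bnd]) (intro summable_mult sums_summable[OF es])
  also have "\<dots> = t^2 * (C * b^2) * exp (\<bar>t\<bar>*b)"
    using sums_mult[OF es, of "t^2 * (C * b^2)"] by (simp add: sums_iff)
  finally have "norm (\<Sum>n. f (n + 2)) \<le> t^2 * (C * b^2) * exp (\<bar>t\<bar>*b)" .
  moreover have "suminf f - u 0 - t *\<^sub>R u 1 = (\<Sum>n. f (n + 2))"
    using split s2 by simp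
  ultimately show "norm ((\<Sum>k. (t^k / fact k) *\<^sub>R u k) - u 0 - t *\<^sub>R u 1) \<le> t^2 * (C * b^2 * exp (\<bar>t\<bar>*b))"
    by (simp add: f_def mult.assoc)
qed



lemma bl_apply: "bounded_linear (\<lambda>M::real^'n::finite^'m::finite. M *v x)"
proof -
  have "linear (\<lambda>M::real^'n::finite^'m::finite. M *v x)"
    by (rule linearI) (simp_all add: matrix_vector_mult_add_rdistrib scaleR_matrix_vector_assoc)
  then show ?thesis using linear_conv_bounded_linear by blast
qed

lemma aff_exp_apply:
  fixes A :: "real^'n::finite^'n" and v x :: "real^'n"
  defines "u \<equiv> \<lambda>k. matpow A k *v x + (case k of 0 \<Rightarrow> 0 | Suc j \<Rightarrow> matpow A j *v v)"
  shows "aff_apply (aff_exp (t *\<^sub>R (A, v))) x = (\<Sum>k. (t^k / fact k) *\<^sub>R u k)"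
    and "\<And>k. norm (u k) \<le> (norm x + norm v) * (onorm ((*v) A) + 1) ^ k"
proof -
  define a where "a = onorm ((*v) A)"
  have a0: "a \<ge> 0" unfolding a_def by (rule onorm_pos_le[OF bl_mv])
  define w where "w = (\<lambda>k. case k of 0 \<Rightarrow> 0 | Suc j \<Rightarrow> matpow A j *v v)"
  have aa: "a ^ k \<le> (a + 1) ^ k" for k using a0 by (intro power_mono) auto
  have aa2: "(a + 1) ^ k \<le> (a + 1) ^ Suc k" for k using a0 by simp
  have wb: "norm (w k) \<le> norm v * (a + 1) ^ k" for k
  proof (cases k)
    case 0 then show ?thesis by (simp add: w_def)
  next
    case (Suc j)
    have "norm (w k) \<le> a ^ j * norm v" unfolding Suc w_def a_def by (simp add: matpow_vec_bound)
    also have "\<dots> \<le> (a+1) ^ k * norm v" 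
      using order_trans[OF aa[of j] aa2[of j]] Suc by (intro mult_right_mono) auto
    finally show ?thesis by (simp add: mult.commute)
  qed
  have xb: "norm (matpow A k *v x) \<le> norm x * (a + 1) ^ k" for k
  proof -
    have "norm (matpow A k *v x) \<le> a ^ k * norm x" unfolding a_def by (rule matpow_vec_bound)
    also have "\<dots> \<le> (a+1) ^ k * norm x" using aa[of k] by (intro mult_right_mono) auto
    finally show ?thesis by (simp add: mult.commute)
  qed
  have ub: "norm (u k) \<le> (norm x + norm v) * (a + 1) ^ k" for k
  proof -
    have "norm (u k) \<le> norm (matpow A k *v x) + norm (w k)"
      unfolding u_def w_def by (rule norm_triangle_ineq)
    also have "\<dots> \<le> norm x * (a + 1) ^ k + norm v * (a + 1) ^ k" using xb wb by (rule add_mono)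
    finally show ?thesis by (simp add: distrib_right)
  qed
  then show "\<And>k. norm (u k) \<le> (norm x + norm v) * (onorm ((*v) A) + 1) ^ k" unfolding a_def .
  \<comment> \<open>linear part\<close>
  have smat: "summable (\<lambda>k. (t^k / fact k) *\<^sub>R matpow A k)"
    by (rule series_bound(1)[where C="real CARD('n) * real CARD('n)" and b=a])
       (simp_all add: a_def matpow_norm_bound onorm_pos_le[OF bl_mv])
  have m1: "(1 / fact k) *\<^sub>R matpow (t *\<^sub>R A) k = (t^k / fact k) *\<^sub>R matpow A k" for k
    by (simp add: matpow_scale)
  have lin: "mexp (t *\<^sub>R A) *v x = (\<Sum>k. (t^k / fact k) *\<^sub>R (matpow A k *v x))"
  proof -
    have "mexp (t *\<^sub>R A) *v x = (\<Sum>k. (t^k / fact k) *\<^sub>R matpow A k) *v x"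
      unfolding mexp_def m1 ..
    also have "\<dots> = (\<Sum>k. ((t^k / fact k) *\<^sub>R matpow A k) *v x)"
      by (rule bounded_linear.suminf[OF bl_apply smat])
    also have "\<dots> = (\<Sum>k. (t^k / fact k) *\<^sub>R (matpow A k *v x))"
      by (simp add: scaleR_matrix_vector_assoc)
    finally show ?thesis .
  qed
  have s1: "summable (\<lambda>k. (t^k / fact k) *\<^sub>R (matpow A k *v x))"
    by (rule series_bound(1)[where C="norm x" and b="a+1"]) (simp_all add: xb a0)
  \<comment> \<open>translation part\<close>
  have s2: "summable (\<lambda>k. (t^k / fact k) *\<^sub>R w k)"
    by (rule series_bound(1)[where C="norm v" and b="a+1"]) (simp_all add: wb a0)
  have tr: "(\<Sum>k. (1 / fact (Suc k)) *\<^sub>R (matpow (t *\<^sub>R A) k *v (t *\<^sub>R v)))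
      = (\<Sum>k. (t^k / fact k) *\<^sub>R w k)"
  proof -
    have "(\<lambda>k. (1 / fact (Suc k)) *\<^sub>R (matpow (t *\<^sub>R A) k *v (t *\<^sub>R v)))
        = (\<lambda>k. (t^(Suc k) / fact (Suc k)) *\<^sub>R w (Suc k))"
      by (rule ext) (simp add: w_def matpow_scale scaleR_matrix_vector_assoc[symmetric]
            matrix_vector_mult_scaleR mult.commute)
    then have "(\<Sum>k. (1 / fact (Suc k)) *\<^sub>R (matpow (t *\<^sub>R A) k *v (t *\<^sub>R v)))
        = (\<Sum>k. (t^k / fact k) *\<^sub>R w k) - (t^0 / fact 0) *\<^sub>R w 0"
      using suminf_split_head[OF s2] by simp
    also have "\<dots> = (\<Sum>k. (t^k / fact k) *\<^sub>R w k)" by (simp add: w_def)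
    finally show ?thesis .
  qed
  have "aff_apply (aff_exp (t *\<^sub>R (A, v))) x
      = (\<Sum>k. (t^k / fact k) *\<^sub>R (matpow A k *v x)) + (\<Sum>k. (t^k / fact k) *\<^sub>R w k)"
    by (simp only: aff_apply_def aff_exp_def scaleR_Pair fst_conv snd_conv lin tr)
  also have "\<dots> = (\<Sum>k. (t^k / fact k) *\<^sub>R (matpow A k *v x) + (t^k / fact k) *\<^sub>R w k)"
    by (rule suminf_add[OF s1 s2])
  also have "\<dots> = (\<Sum>k. (t^k / fact k) *\<^sub>R u k)"
    by (simp add: u_def w_def scaleR_right_distrib)
  finally show "aff_apply (aff_exp (t *\<^sub>R (A, v))) x = (\<Sum>k. (t^k / fact k) *\<^sub>R u k)" .
qed



lemma div_aux: "(t::real) \<noteq> 0 \<Longrightarrow> (E - x) /\<^sub>R t - w = (1 / t) *\<^sub>R (E - x - t *\<^sub>R (w::'a::real_vector))"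
  by (simp add: scaleR_diff_right divide_inverse)

lemma div_bound: "(t::real) \<noteq> 0 \<Longrightarrow> norm (y::'a::real_normed_vector) \<le> t^2 * K \<Longrightarrow> norm ((1/t) *\<^sub>R y) \<le> \<bar>t\<bar> * K"
proof -
  assume t: "t \<noteq> 0" and y: "norm y \<le> t^2 * K"
  have "norm ((1/t) *\<^sub>R y) = norm y / \<bar>t\<bar>" by simp
  also have "\<dots> \<le> t^2 * K / \<bar>t\<bar>" using y by (rule divide_right_mono) simp
  also have "t^2 = \<bar>t\<bar> * \<bar>t\<bar>" by (simp add: power2_eq_square)
  also have "\<bar>t\<bar> * \<bar>t\<bar> * K / \<bar>t\<bar> = \<bar>t\<bar> * K" using t by (simp only: mult.assoc nonzero_mult_div_cancel_left abs_eq_0 not_False_eq_True)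
  finally show ?thesis .
qed

lemma exp_lim:
  fixes A :: "real^'n::finite^'n" and v x :: "real^'n"
  shows "((\<lambda>t. (aff_apply (aff_exp (t *\<^sub>R (A, v))) x - x) /\<^sub>R t) \<longlongrightarrow> A *v x + v) (at 0)"
proof -
  define u where "u \<equiv> \<lambda>k. matpow A k *v x + (case k of 0 \<Rightarrow> 0 | Suc j \<Rightarrow> matpow A j *v v)"
  define C where "C = norm x + norm v"
  define b where "b = onorm ((*v) A) + 1"
  have b0: "b \<ge> 0" unfolding b_def using onorm_pos_le[OF bl_mv, of A] by simp
  have E: "aff_apply (aff_exp (t *\<^sub>R (A, v))) x = (\<Sum>k. (t^k / fact k) *\<^sub>R u k)" for t
    unfolding u_def by (rule aff_exp_apply(1))
  have ub: "norm (u k) \<le> C * b ^ k" for k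
    unfolding u_def C_def b_def by (rule aff_exp_apply(2))
  have u0: "u 0 = x" by (simp add: u_def)
  have u1: "u 1 = A *v x + v" by (simp add: u_def)
  define g where "g = (\<lambda>t::real. \<bar>t\<bar> * (C * b^2 * exp (\<bar>t\<bar>*b)))"
  have ev: "\<forall>\<^sub>F t in at 0. norm ((aff_apply (aff_exp (t *\<^sub>R (A, v))) x - x) /\<^sub>R t - (A *v x + v)) \<le> g t"
    unfolding eventually_at_filter
  proof (rule always_eventually, intro allI impI)
    fix t :: real assume t: "t \<noteq> 0"
    let ?E = "aff_apply (aff_exp (t *\<^sub>R (A, v))) x"
    have eq: "(?E - x) /\<^sub>R t - (A *v x + v) = (1 / t) *\<^sub>R (?E - u 0 - t *\<^sub>R u 1)"
      unfolding u0 u1 using t by (rule div_aux)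
    have bd: "norm (?E - u 0 - t *\<^sub>R u 1) \<le> t^2 * (C * b^2 * exp (\<bar>t\<bar>*b))"
      unfolding E by (rule series_bound(2)[OF ub b0])
    show "norm ((?E - x) /\<^sub>R t - (A *v x + v)) \<le> g t"
      unfolding eq g_def by (rule div_bound[OF t bd])
  qed
  have "(g \<longlongrightarrow> \<bar>0\<bar> * (C * b^2 * exp (\<bar>0\<bar>*b))) (at 0)"
    unfolding g_def by (intro tendsto_intros)
  then have "(g \<longlongrightarrow> 0) (at 0)" by simp
  from Lim_null_comparison[OF ev this] show ?thesis by (simp add: LIM_zero_iff)
qed



definition Kf :: "'n::finite aff \<Rightarrow> real^'n \<Rightarrow> real^'n" where
  "Kf X x = fst X *v x + snd X"

lemma D_lim: "((\<lambda>t. (aff_apply (aff_exp (t *\<^sub>R X)) x - x) /\<^sub>R t) \<longlongrightarrow> Kf X x) (at 0)"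
  using exp_lim[of "fst X" "snd X" x] by (simp add: Kf_def)

lemma aff_apply_comp: "aff_apply (aff_comp g h) x = aff_apply g (aff_apply h x)"
  by (simp add: aff_apply_def aff_comp_def matrix_vector_mul_assoc matrix_vector_right_distrib add.assoc)

lemma iso_pres: "g \<in> Iso S \<Longrightarrow> bform S (fst g *v u) (fst g *v w) = bform S u w"
proof -
  assume "g \<in> Iso S"
  then have I: "transpose (fst g) ** S ** fst g = S" by (simp add: Iso_def)
  have "bform S (fst g *v u) (fst g *v w) = u \<bullet> (transpose (fst g) *v (S *v (fst g *v w)))"
    unfolding bform_def by (rule dot_mv)
  also have "\<dots> = u \<bullet> ((transpose (fst g) ** S ** fst g) *v w)"
    by (simp add: matrix_vector_mul_assoc matrix_mul_assoc)
  also have "\<dots> = bform S u w" by (simp add: I bform_def)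
  finally show ?thesis .
qed

lemma mv_scaleR: "(A::real^'n::finite^'m::finite) *v ((c::real) *\<^sub>R x) = c *\<^sub>R (A *v x)"
  by (simp add: vec_eq_iff matrix_vector_mult_def sum_distrib_left mult.left_commute)

lemma bform_expand: "bform S (u + t *\<^sub>R p) (w + t *\<^sub>R q) =
   bform S u w + t * (bform S p w + bform S u q + t * bform S p q)"
  by (simp add: bform_def inner_add_left inner_add_right matrix_vector_right_distrib
      mv_scaleR algebra_simps)

lemma bform_tendsto:
  assumes "(f \<longlongrightarrow> a) F" "(g \<longlongrightarrow> c) F"
  shows "((\<lambda>t. bform S (f t) (g t)) \<longlongrightarrow> bform S a c) F"
  unfolding bform_def
  by (intro tendsto_inner assms bounded_linear.tendsto[OF matrix_vector_mul_bounded_linear])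

lemma key_lim:
  fixes Lu Lw :: "real \<Rightarrow> real^'n::finite"
  assumes "(Lu \<longlongrightarrow> a) (at 0)" "(Lw \<longlongrightarrow> c) (at 0)"
    and eq: "\<And>t. t \<noteq> 0 \<Longrightarrow> bform S (u + t *\<^sub>R Lu t) (w + t *\<^sub>R Lw t) = bform S u w"
  shows "bform S a w + bform S u c = 0"
proof -
  define F where "F = (\<lambda>t. bform S (Lu t) w + bform S u (Lw t) + t * bform S (Lu t) (Lw t))"
  have "(F \<longlongrightarrow> bform S a w + bform S u c + 0 * bform S a c) (at 0)"
    unfolding F_def by (intro tendsto_intros bform_tendsto assms)
  then have l1: "(F \<longlongrightarrow> bform S a w + bform S u c) (at 0)" by simp
  have ev: "\<forall>\<^sub>F t in at 0. 0 = F t"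
    unfolding eventually_at_filter
  proof (rule always_eventually, intro allI impI)
    fix t :: real assume t: "t \<noteq> 0"
    have "t * F t = 0" using eq[OF t] bform_expand[of S u t "Lu t" w "Lw t"] by (simp add: F_def)
    then show "0 = F t" using t by simp
  qed
  have "((\<lambda>t. 0::real) \<longlongrightarrow> 0) (at 0)" by simp
  then have "(F \<longlongrightarrow> 0) (at 0)" by (rule Lim_transform_eventually[OF _ ev])
  from tendsto_unique[OF _ l1 this] show ?thesis by simp
qed

lemma lin_lim:
  "((\<lambda>t. (fst (aff_exp (t *\<^sub>R X)) *v u - u) /\<^sub>R t) \<longlongrightarrow> fst X *v u) (at 0)"
proof -
  have e: "(fst (aff_exp (t *\<^sub>R X)) *v u - u) /\<^sub>R t =
     (aff_apply (aff_exp (t *\<^sub>R X)) u - u) /\<^sub>R t - (aff_apply (aff_exp (t *\<^sub>R X)) 0 - 0) /\<^sub>R t" for t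
    by (simp add: aff_apply_def scaleR_diff_right[symmetric])
  have "((\<lambda>t. (aff_apply (aff_exp (t *\<^sub>R X)) u - u) /\<^sub>R t - (aff_apply (aff_exp (t *\<^sub>R X)) 0 - 0) /\<^sub>R t)
      \<longlongrightarrow> Kf X u - Kf X 0) (at 0)"
    by (intro tendsto_diff D_lim)
  then show ?thesis unfolding e by (simp add: Kf_def)
qed

lemma killing:
  assumes "X \<in> lie_algebra G" "G \<subseteq> Iso S"
  shows "bform S (fst X *v u) w + bform S u (fst X *v w) = 0"
proof (rule key_lim[OF lin_lim lin_lim])
  fix t :: real assume t: "t \<noteq> 0"
  let ?M = "fst (aff_exp (t *\<^sub>R X))"
  have g: "aff_exp (t *\<^sub>R X) \<in> Iso S" using assms by (auto simp: lie_algebra_def)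
  have "u + t *\<^sub>R ((?M *v u - u) /\<^sub>R t) = ?M *v u" "w + t *\<^sub>R ((?M *v w - w) /\<^sub>R t) = ?M *v w"
    using t by simp_all
  then show "bform S (u + t *\<^sub>R ((?M *v u - u) /\<^sub>R t)) (w + t *\<^sub>R ((?M *v w - w) /\<^sub>R t)) = bform S u w"
    using iso_pres[OF g] by simp
qed




lemma aff_apply_diff: "aff_apply h a - aff_apply h b = fst h *v (a - b)"
  by (simp add: aff_apply_def matrix_vector_mult_diff_distrib)

lemma commute_K:
  assumes X: "X \<in> lie_algebra G" and h: "h \<in> centralizer S G"
  shows "fst h *v Kf X x = Kf X (aff_apply h x)"
proof -
  define D where "D = (\<lambda>y t. (aff_apply (aff_exp (t *\<^sub>R X)) y - y) /\<^sub>R t)"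
  have l1: "((\<lambda>t. fst h *v D x t) \<longlongrightarrow> fst h *v Kf X x) (at 0)"
    unfolding D_def by (intro bounded_linear.tendsto[OF matrix_vector_mul_bounded_linear] D_lim)
  have l2: "(D (aff_apply h x) \<longlongrightarrow> Kf X (aff_apply h x)) (at 0)"
    unfolding D_def by (rule D_lim)
  have eq: "fst h *v D x t = D (aff_apply h x) t" for t
  proof -
    let ?g = "aff_exp (t *\<^sub>R X)"
    have gG: "?g \<in> G" using X by (simp add: lie_algebra_def)
    have c: "aff_comp h ?g = aff_comp ?g h" using h gG by (simp add: centralizer_def)
    have "aff_apply h (aff_apply ?g x) = aff_apply ?g (aff_apply h x)"
      using c by (metis aff_apply_comp)
    then have "fst h *v (aff_apply ?g x - x) = aff_apply ?g (aff_apply h x) - aff_apply h x"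
      by (metis aff_apply_diff)
    then show ?thesis
      by (simp add: D_def mv_scaleR)
  qed
  have "((\<lambda>t. fst h *v D x t) \<longlongrightarrow> Kf X (aff_apply h x)) (at 0)"
    unfolding eq by (rule l2)
  from tendsto_unique[OF _ l1 this] show ?thesis by simp
qed

lemma const_form:
  assumes P: "P \<in> lie_algebra G" and Q: "Q \<in> lie_algebra G"
    and tr: "acts_transitively (centralizer S G)"
  shows "bform S (Kf P y) (Kf Q y) = bform S (Kf P x) (Kf Q x)"
proof -
  obtain h where h: "h \<in> centralizer S G" and hx: "aff_apply h x = y"
    using tr unfolding acts_transitively_def by blast
  have hI: "h \<in> Iso S" using h by (simp add: centralizer_def)
  have "bform S (Kf P y) (Kf Q y) = bform S (fst h *v Kf P x) (fst h *v Kf Q x)"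
    using commute_K[OF P h, of x] commute_K[OF Q h, of x] hx by simp
  also have "\<dots> = bform S (Kf P x) (Kf Q x)" by (rule iso_pres[OF hI])
  finally show ?thesis .
qed

lemma Kf_add: "Kf P (x + w) = Kf P x + fst P *v w"
  by (simp add: Kf_def matrix_vector_right_distrib algebra_simps)
lemma Kf_diff: "Kf P (x - w) = Kf P x - fst P *v w"
  by (simp add: Kf_def matrix_vector_mult_diff_distrib algebra_simps)

lemma bform_add1: "bform S (a + b) c = bform S a c + bform S b c"
  by (simp add: bform_def inner_add_left)
lemma bform_add2: "bform S a (b + c) = bform S a b + bform S a c"
  by (simp add: bform_def inner_add_right matrix_vector_right_distrib)
lemma bform_diff1: "bform S (a - b) c = bform S a c - bform S b c"
  by (simp add: bform_def inner_diff_left)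
lemma bform_diff2: "bform S a (b - c) = bform S a b - bform S a c"
  by (simp add: bform_def inner_diff_right matrix_vector_mult_diff_distrib)
lemma bform_neg1: "bform S (- a) c = - bform S a c"
  by (simp add: bform_def)
lemma bform_scale2: "bform S a (r *\<^sub>R c) = r * bform S a c"
  by (simp add: bform_def mv_scaleR)
lemma bform_zero2: "bform S a 0 = 0"
  by (simp add: bform_def)

lemma bform_sym: "transpose S = S \<Longrightarrow> bform S a b = bform S b a"
  unfolding bform_def by (metis dot_mv inner_commute)

lemma deriv_rel:
  assumes P: "P \<in> lie_algebra G" and Q: "Q \<in> lie_algebra G"
    and tr: "acts_transitively (centralizer S G)"
  shows "bform S (fst P *v w) (Kf Q x) + bform S (Kf P x) (fst Q *v w) = 0"
proof -
  have e1: "bform S (Kf P (x + w)) (Kf Q (x + w)) = bform S (Kf P (x - w)) (Kf Q (x - w))"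
    using const_form[OF P Q tr, of "x + w" x] const_form[OF P Q tr, of "x - w" x] by simp
  have "bform S (Kf P (x + w)) (Kf Q (x + w)) - bform S (Kf P (x - w)) (Kf Q (x - w))
     = 2 * (bform S (fst P *v w) (Kf Q x) + bform S (Kf P x) (fst Q *v w))"
    unfolding Kf_add Kf_diff bform_add1 bform_add2 bform_diff1 bform_diff2 by simp
  with e1 show ?thesis by simp
qed




lemma self_add_zero: "(a::real^'n::finite) + a = 0 \<Longrightarrow> a = 0"
proof -
  assume "a + a = 0"
  then have "(2::real) *\<^sub>R a = 0" by (simp add: scaleR_2)
  then show ?thesis by simp
qed

lemma nondeg_zero:
  assumes "nondeg_sym_form S" and "\<And>w. bform S w z = 0"
  shows "z = 0"
proof -
  have "(S *v z) \<bullet> (S *v z) = 0" using assms(2)[of "S *v z"] by (simp add: bform_def)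
  then have Sz: "S *v z = 0" by simp
  obtain B where B: "B ** S = mat 1" using assms(1) unfolding nondeg_sym_form_def invertible_def by blast
  have "z = (B ** S) *v z" by (simp add: B)
  also have "\<dots> = B *v (S *v z)" by (simp add: matrix_vector_mul_assoc)
  also have "\<dots> = 0" by (simp add: Sz)
  finally show ?thesis .
qed

lemma vec_rel:
  assumes P: "P \<in> lie_algebra G" and Q: "Q \<in> lie_algebra G"
    and tr: "acts_transitively (centralizer S G)" and GI: "G \<subseteq> Iso S"
    and nd: "nondeg_sym_form S"
  shows "fst P *v Kf Q x + fst Q *v Kf P x = 0"
proof (rule nondeg_zero[OF nd])
  fix w
  have sym: "transpose S = S" using nd by (simp add: nondeg_sym_form_def)
  have d: "bform S (fst P *v w) (Kf Q x) + bform S (Kf P x) (fst Q *v w) = 0"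
    by (rule deriv_rel[OF P Q tr])
  have k1: "bform S (fst P *v w) (Kf Q x) + bform S w (fst P *v Kf Q x) = 0"
    by (rule killing[OF P GI])
  have k2: "bform S (fst Q *v w) (Kf P x) + bform S w (fst Q *v Kf P x) = 0"
    by (rule killing[OF Q GI])
  have s: "bform S (Kf P x) (fst Q *v w) = bform S (fst Q *v w) (Kf P x)"
    by (rule bform_sym[OF sym])
  show "bform S w (fst P *v Kf Q x + fst Q *v Kf P x) = 0"
    unfolding bform_add2 using d k1 k2 s by linarith
qed

lemma Kf_bracket: "Kf (lie_bracket X Y) p = fst X *v Kf Y p - fst Y *v Kf X p"
  unfolding Kf_def lie_bracket_def fst_conv snd_conv matrix_vector_mult_diff_rdistrib
    matrix_vector_mul_assoc[symmetric] matrix_vector_right_distrib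
  by (simp only: diff_add_eq add_diff_eq diff_diff_eq2 add.assoc add.commute add.left_commute diff_diff_eq)

lemma orbit_Kf: "orbit_form S p Z W = bform S (Kf Z p) (Kf W p)"
  by (simp add: orbit_form_def Kf_def)

lemma Kf_add_arg: "Kf (W1 + W2) p = Kf W1 p + Kf W2 p"
  by (simp add: Kf_def matrix_vector_mult_add_rdistrib)
lemma smv: "((c::real) *\<^sub>R (A::real^'n::finite^'m::finite)) *v x = c *\<^sub>R (A *v x)"
  by (simp add: vec_eq_iff matrix_vector_mult_def sum_distrib_left mult.assoc)
lemma Kf_scale_arg: "Kf (c *\<^sub>R W) p = c *\<^sub>R Kf W p"
  unfolding Kf_def fst_scaleR snd_scaleR smv by (rule scaleR_right_distrib[symmetric])
lemma Kf_zero_arg: "Kf 0 p = 0"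
  by (simp add: Kf_def)

theorem lemma4p9:
  fixes S :: "real^'n::finite^'n" and G :: "'n aff set" and p :: "real^'n"
    and X Y :: "'n aff"
  assumes "nondeg_sym_form S"
    and "G \<subseteq> Iso S" and "is_subgroup G" and "zariski_closed G"
    and "acts_transitively (centralizer S G)"
    and "X \<in> lie_algebra G" and "Y \<in> lie_algebra G"
  shows "\<forall>W \<in> span {X, Y, lie_bracket X Y}. orbit_form S p (lie_bracket X Y) W = 0"
proof -
  note nd = assms(1) and GI = assms(2) and tr = assms(5) and X = assms(6) and Y = assms(7)
  define AX where "AX = fst X"
  define AY where "AY = fst Y"
  define Xp where "Xp = Kf X p"
  define Yp where "Yp = Kf Y p"
  define Zp where "Zp = Kf (lie_bracket X Y) p"
  have kX: "bform S (AX *v u) w = - bform S u (AX *v w)" for u w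
    using killing[OF X GI, of u w] unfolding AX_def by linarith
  have kY: "bform S (AY *v u) w = - bform S u (AY *v w)" for u w
    using killing[OF Y GI, of u w] unfolding AY_def by linarith
  have rXX: "AX *v Kf X x = 0" for x
    using vec_rel[OF X X tr GI nd, of x] unfolding AX_def by (rule self_add_zero)
  have rYY: "AY *v Kf Y x = 0" for x
    using vec_rel[OF Y Y tr GI nd, of x] unfolding AY_def by (rule self_add_zero)
  have rXY: "AY *v Xp = - (AX *v Yp)"
    using vec_rel[OF X Y tr GI nd, of p] unfolding AX_def AY_def Xp_def Yp_def
    by (simp add: eq_neg_iff_add_eq_0 add.commute)
  have AXX: "AX *v (AX *v y) = 0" for y
  proof -
    have "AX *v Kf X y - AX *v Kf X 0 = AX *v (AX *v y)"
      by (simp add: Kf_def AX_def matrix_vector_right_distrib)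
    then show ?thesis using rXX[of y] rXX[of 0] by simp
  qed
  have XXp: "AX *v Xp = 0" unfolding Xp_def by (rule rXX)
  have YYp: "AY *v Yp = 0" unfolding Yp_def by (rule rYY)
  have Z1: "Zp = AX *v Yp + AX *v Yp"
    unfolding Zp_def Kf_bracket using rXY by (simp add: AX_def AY_def Xp_def Yp_def)
  have AXZ: "AX *v Zp = 0" unfolding Z1 matrix_vector_right_distrib AXX by simp
  have oX: "bform S Zp Xp = 0"
    unfolding Z1 bform_add1 kX XXp bform_zero2 by simp
  have oY: "bform S Zp Yp = 0"
  proof -
    have e: "Zp = - (AY *v Xp) - AY *v Xp" using Z1 rXY by simp
    show ?thesis unfolding e bform_diff1 bform_neg1 kY YYp bform_zero2 by simp
  qed
  have oZ: "bform S Zp Zp = 0"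
  proof -
    have "bform S Zp Zp = bform S (AX *v Yp + AX *v Yp) Zp" using Z1 by simp
    also have "\<dots> = 0" unfolding bform_add1 kX AXZ bform_zero2 by simp
    finally show ?thesis .
  qed
  show ?thesis
  proof
    fix W assume W: "W \<in> span {X, Y, lie_bracket X Y}"
    show "orbit_form S p (lie_bracket X Y) W = 0"
      unfolding orbit_Kf Zp_def[symmetric]
    proof (rule span_induct[OF W])
      show "subspace {W. bform S Zp (Kf W p) = 0}"
        unfolding subspace_def
        by (simp add: Kf_add_arg Kf_scale_arg Kf_zero_arg bform_add2 bform_scale2 bform_zero2)
      fix V assume "V \<in> {X, Y, lie_bracket X Y}"
      then show "bform S Zp (Kf V p) = 0"
        using oX oY oZ unfolding Xp_def Yp_def Zp_def by auto
    qed
  qed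
qed


end
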